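(* Let $(X,d)$ be a geodesic metric space with basepoint $x_0$, and let $(T_X,d^* )$ be its end-approximating tree. Let $x,y\in X$ and $r\in[0,\infty)$. Then $x$ and $y$ lie in the same path component of $X\setminus B(x_0,r)$ if and only if $([x],[y])^*_{[x_0]}>r$.
   Context: $B(x_0,r)$ is the closed ball. With $(x,y)_{x_0}=\frac12(d(x_0,x)+d(x_0,y)-d(x,y))$, let $(x,y)'_{x_0}=\sup\min_{1\leqslant i\leqslant n-1}(x_i,x_{i+1})_{x_0}$, the supremum over all finite sequences $x=x_1,\ldots,x_n=y$ in $X$, and $d'(x,y)=d(x_0,x)+d(x_0,y)-2(x,y)'_{x_0}$. The end-approximating tree is $T_X=X/\sim$, $x\sim y$ iff $d'(x,y)=0$, with metric $d^*([x],[y])=d'(x,y)$, and $([x],[y])^*_{[x_0]}=\frac12(d^*([x_0],[x])+d^*([x_0],[y])-d^*([x],[y]))$ is the Gromov product in $T_X$ (it equals $(x,y)'_{x_0}$). *)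

theory Defs
  imports "HOL-Analysis.Analysis"
begin

definition geodesic_space :: "'a::metric_space itself \<Rightarrow> bool" where
  "geodesic_space _ \<longleftrightarrow>
     (\<forall>x y::'a. \<exists>\<gamma>::real \<Rightarrow> 'a. \<gamma> 0 = x \<and> \<gamma> (dist x y) = y \<and>
        (\<forall>s\<in>{0..dist x y}. \<forall>t\<in>{0..dist x y}. dist (\<gamma> s) (\<gamma> t) = \<bar>s - t\<bar>))"

definition gromov_prod :: "'a::metric_space \<Rightarrow> 'a \<Rightarrow> 'a \<Rightarrow> real" where
  "gromov_prod x0 x y = (dist x0 x + dist x0 y - dist x y) / 2"

definition chain_min :: "'a::metric_space \<Rightarrow> 'a list \<Rightarrow> real" where
  "chain_min x0 xs = Min {gromov_prod x0 (xs ! i) (xs ! Suc i) | i. Suc i < length xs}"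

definition gromov_prod' :: "'a::metric_space \<Rightarrow> 'a \<Rightarrow> 'a \<Rightarrow> real" where
  "gromov_prod' x0 x y =
     Sup {chain_min x0 xs | xs. 2 \<le> length xs \<and> hd xs = x \<and> last xs = y}"

definition dist' :: "'a::metric_space \<Rightarrow> 'a \<Rightarrow> 'a \<Rightarrow> real" where
  "dist' x0 x y = dist x0 x + dist x0 y - 2 * gromov_prod' x0 x y"

definition tclass :: "'a::metric_space \<Rightarrow> 'a \<Rightarrow> 'a set" where
  "tclass x0 x = {z. dist' x0 x z = 0}"

definition end_tree :: "'a::metric_space \<Rightarrow> 'a set set" where
  "end_tree x0 = range (tclass x0)"

definition dstar :: "'a::metric_space \<Rightarrow> 'a set \<Rightarrow> 'a set \<Rightarrow> real" where
  "dstar x0 A B = dist' x0 (SOME a. a \<in> A) (SOME b. b \<in> B)"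

definition gromov_prod_star :: "'a::metric_space \<Rightarrow> 'a set \<Rightarrow> 'a set \<Rightarrow> real" where
  "gromov_prod_star x0 A B =
     (dstar x0 (tclass x0 x0) A + dstar x0 (tclass x0 x0) B - dstar x0 A B) / 2"

end

theory Submission
  imports Defs
begin

lemma gp_le1: "gromov_prod x0 a b \<le> dist x0 a"
  unfolding gromov_prod_def using dist_triangle[of x0 b a] by (simp add: dist_commute)

lemma gp_le2: "gromov_prod x0 a b \<le> dist x0 b"
  unfolding gromov_prod_def using dist_triangle[of x0 a b] by (simp add: dist_commute)

lemma gp_sym: "gromov_prod x0 a b = gromov_prod x0 b a"
  unfolding gromov_prod_def by (simp add: dist_commute)

lemma chain_min_eq:
  "chain_min x0 xs = Min ((\<lambda>i. gromov_prod x0 (xs ! i) (xs ! Suc i)) ` {i. Suc i < length xs})"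
  unfolding chain_min_def by (rule arg_cong[where f=Min]) auto

lemma chain_fin: "finite {i. Suc i < length (xs::'b list)}"
  by (rule finite_subset[of _ "{..<length xs}"]) auto

lemma chain_min_gt_iff:
  assumes "2 \<le> length xs"
  shows "r < chain_min x0 xs \<longleftrightarrow> (\<forall>i. Suc i < length xs \<longrightarrow> r < gromov_prod x0 (xs ! i) (xs ! Suc i))"
proof -
  have ne: "{i. Suc i < length xs} \<noteq> {}" using assms by (auto intro!: exI[of _ 0])
  show ?thesis unfolding chain_min_eq using chain_fin[of xs] ne by (simp add: Min_gr_iff)
qed

lemma chain_min_le:
  assumes "Suc i < length xs"
  shows "chain_min x0 xs \<le> gromov_prod x0 (xs ! i) (xs ! Suc i)"
  unfolding chain_min_eq using chain_fin[of xs] assms by (intro Min_le) auto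

lemma chain_min_le_hd:
  assumes "2 \<le> length xs" shows "chain_min x0 xs \<le> dist x0 (hd xs)"
proof -
  have "chain_min x0 xs \<le> gromov_prod x0 (xs ! 0) (xs ! Suc 0)" using assms by (intro chain_min_le) auto
  also have "\<dots> \<le> dist x0 (xs ! 0)" by (rule gp_le1)
  moreover have "xs \<noteq> []" using assms by auto
  ultimately show ?thesis by (simp add: hd_conv_nth)
qed

lemma chain_min_le_last:
  assumes "2 \<le> length xs" shows "chain_min x0 xs \<le> dist x0 (last xs)"
proof -
  have "chain_min x0 xs \<le> gromov_prod x0 (xs ! (length xs - 2)) (xs ! Suc (length xs - 2))"
    using assms by (intro chain_min_le) auto
  also have "\<dots> \<le> dist x0 (xs ! Suc (length xs - 2))" by (rule gp_le2)
  also have "Suc (length xs - 2) = length xs - 1" using assms by auto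
  moreover have "xs \<noteq> []" using assms by auto
  ultimately show ?thesis by (simp add: last_conv_nth)
qed

lemma chain_min_two: "chain_min x0 [a, b] = gromov_prod x0 a b"
proof -
  have "{i. Suc i < length [a,b]} = {0}" by auto
  then show ?thesis unfolding chain_min_eq by simp
qed

definition CS :: "'a::metric_space \<Rightarrow> 'a \<Rightarrow> 'a \<Rightarrow> real set" where
  "CS x0 x y = {chain_min x0 xs | xs. 2 \<le> length xs \<and> hd xs = x \<and> last xs = y}"

lemma CS_ne: "CS x0 x y \<noteq> {}"
  unfolding CS_def by (rule ccontr) (auto dest!: spec[of _ "chain_min x0 [x,y]"] spec[of _ "[x,y]"])

lemma CS_bdd: "bdd_above (CS x0 x y)"
proof (rule bdd_aboveI)
  fix z assume "z \<in> CS x0 x y"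
  then obtain xs where "z = chain_min x0 xs" "2 \<le> length xs" "hd xs = x" unfolding CS_def by blast
  then show "z \<le> dist x0 x" using chain_min_le_hd[of xs x0] by simp
qed

lemma gp'_CS: "gromov_prod' x0 x y = Sup (CS x0 x y)"
  unfolding gromov_prod'_def CS_def by simp

lemma gp'_ge: "2 \<le> length xs \<Longrightarrow> hd xs = x \<Longrightarrow> last xs = y \<Longrightarrow> chain_min x0 xs \<le> gromov_prod' x0 x y"
  unfolding gp'_CS by (rule cSup_upper[OF _ CS_bdd]) (auto simp: CS_def)

lemma gp'_le1: "gromov_prod' x0 x y \<le> dist x0 x"
  unfolding gp'_CS by (rule cSup_least[OF CS_ne]) (auto simp: CS_def intro: chain_min_le_hd[where xs=xs for xs, simplified])

lemma gp'_le2: "gromov_prod' x0 x y \<le> dist x0 y"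
  unfolding gp'_CS by (rule cSup_least[OF CS_ne]) (auto simp: CS_def intro: chain_min_le_last[where xs=xs for xs, simplified])

lemma gp'_gt_iff:
  "r < gromov_prod' x0 x y \<longleftrightarrow> (\<exists>xs. 2 \<le> length xs \<and> hd xs = x \<and> last xs = y \<and>
      (\<forall>i. Suc i < length xs \<longrightarrow> r < gromov_prod x0 (xs ! i) (xs ! Suc i)))"
  unfolding gp'_CS less_cSup_iff[OF CS_ne CS_bdd]
  by (auto simp: CS_def chain_min_gt_iff)

lemma le_by_gt: "(\<And>r::real. r < a \<Longrightarrow> r < b) \<Longrightarrow> a \<le> b"
  by (metis less_irrefl not_le)

lemma gp'_sym_le: "gromov_prod' x0 x y \<le> gromov_prod' x0 y x"
proof (rule le_by_gt)
  fix r assume "r < gromov_prod' x0 x y"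
  then obtain xs where xs: "2 \<le> length xs" "hd xs = x" "last xs = y"
    "\<And>i. Suc i < length xs \<Longrightarrow> r < gromov_prod x0 (xs ! i) (xs ! Suc i)"
    unfolding gp'_gt_iff by blast
  have ne: "xs \<noteq> []" using xs by auto
  have "\<forall>i. Suc i < length (rev xs) \<longrightarrow> r < gromov_prod x0 (rev xs ! i) (rev xs ! Suc i)"
  proof (intro allI impI)
    fix i assume i: "Suc i < length (rev xs)"
    define j where "j = length xs - Suc (Suc i)"
    have 1: "rev xs ! i = xs ! Suc j" using i by (simp add: rev_nth j_def Suc_diff_Suc)
    have 2: "rev xs ! Suc i = xs ! j" using i by (simp add: rev_nth j_def)
    have "Suc j < length xs" using i j_def by auto
    then show "r < gromov_prod x0 (rev xs ! i) (rev xs ! Suc i)"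
      using xs(4)[of j] by (simp add: 1 2 gp_sym)
  qed
  moreover have "hd (rev xs) = y" "last (rev xs) = x" using xs ne by (auto simp: hd_rev last_rev)
  ultimately show "r < gromov_prod' x0 y x" unfolding gp'_gt_iff using xs(1)
    by (intro exI[of _ "rev xs"]) auto
qed

lemma gp'_sym: "gromov_prod' x0 x y = gromov_prod' x0 y x"
  using gp'_sym_le[of x0 x y] gp'_sym_le[of x0 y x] by simp

lemma gp'_trans: "min (gromov_prod' x0 x y) (gromov_prod' x0 y z) \<le> gromov_prod' x0 x z"
proof (rule le_by_gt)
  fix r assume "r < min (gromov_prod' x0 x y) (gromov_prod' x0 y z)"
  then have r1: "r < gromov_prod' x0 x y" and r2: "r < gromov_prod' x0 y z" by auto
  from r1 obtain xs where xs: "2 \<le> length xs" "hd xs = x" "last xs = y"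
    "\<And>i. Suc i < length xs \<Longrightarrow> r < gromov_prod x0 (xs ! i) (xs ! Suc i)"
    unfolding gp'_gt_iff by blast
  from r2 obtain ys where ys: "2 \<le> length ys" "hd ys = y" "last ys = z"
    "\<And>i. Suc i < length ys \<Longrightarrow> r < gromov_prod x0 (ys ! i) (ys ! Suc i)"
    unfolding gp'_gt_iff by blast
  have ry: "r < dist x0 y" using r1 gp'_le2[of x0 x y] by simp
  have "\<forall>i. Suc i < length (xs @ ys) \<longrightarrow> r < gromov_prod x0 ((xs @ ys) ! i) ((xs @ ys) ! Suc i)"
  proof (intro allI impI)
    fix i assume i: "Suc i < length (xs @ ys)"
    consider "Suc i < length xs" | "Suc i = length xs" | "length xs \<le> i" by linarith
    then show "r < gromov_prod x0 ((xs @ ys) ! i) ((xs @ ys) ! Suc i)"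
    proof cases
      case 1 then show ?thesis using xs(4)[of i] by (simp add: nth_append)
    next
      case 2
      have "xs \<noteq> []" "i = length xs - 1" using 2 xs by auto
      then have a: "(xs @ ys) ! i = y" using 2 xs by (simp add: nth_append last_conv_nth)
      have "ys \<noteq> []" using ys by auto
      then have b: "(xs @ ys) ! Suc i = y" using 2 ys by (simp add: nth_append hd_conv_nth)
      have "gromov_prod x0 y y = dist x0 y" by (simp add: gromov_prod_def)
      then show ?thesis using a b ry by simp
    next
      case 3
      have "Suc (i - length xs) < length ys" using i 3 by auto
      moreover have "Suc i - length xs = Suc (i - length xs)" using 3 by auto
      ultimately show ?thesis using 3 ys(4)[of "i - length xs"] by (simp add: nth_append)
    qed
  qed
  moreover have "xs \<noteq> []" "ys \<noteq> []" using xs ys by auto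
  then have "hd (xs @ ys) = x" "last (xs @ ys) = z" using xs ys by auto
  ultimately show "r < gromov_prod' x0 x z" unfolding gp'_gt_iff using xs(1)
    by (intro exI[of _ "xs @ ys"]) auto
qed

lemma gp'_refl: "gromov_prod' x0 x x = dist x0 x"
  using gp'_ge[of "[x,x]" x x x0] gp'_le1[of x0 x x] by (simp add: chain_min_two gromov_prod_def)

lemma gp'_base: "gromov_prod' x0 x0 y = 0"
  using gp'_ge[of "[x0,y]" x0 y x0] gp'_le1[of x0 x0 y] by (simp add: chain_min_two gromov_prod_def)

lemma dist'_sym: "dist' x0 x y = dist' x0 y x"
  unfolding dist'_def using gp'_sym[of x0 x y] by simp

lemma dist'_zero:
  assumes "dist' x0 x a = 0"
  shows "dist x0 a = dist x0 x \<and> gromov_prod' x0 x a = dist x0 x"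
  using assms gp'_le1[of x0 x a] gp'_le2[of x0 x a] unfolding dist'_def by linarith

lemma dist'_cong1:
  assumes "dist' x0 x a = 0"
  shows "dist' x0 a y = dist' x0 x y"
proof -
  have d: "dist x0 a = dist x0 x" and g: "gromov_prod' x0 x a = dist x0 x" using dist'_zero[OF assms] by auto
  have "min (gromov_prod' x0 a x) (gromov_prod' x0 x y) \<le> gromov_prod' x0 a y" by (rule gp'_trans)
  moreover have "min (gromov_prod' x0 x a) (gromov_prod' x0 a y) \<le> gromov_prod' x0 x y" by (rule gp'_trans)
  moreover have "gromov_prod' x0 x y \<le> dist x0 x" "gromov_prod' x0 a y \<le> dist x0 a" by (rule gp'_le1)+
  ultimately have "gromov_prod' x0 a y = gromov_prod' x0 x y" using g d gp'_sym[of x0 a x] by linarith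
  then show ?thesis unfolding dist'_def using d by simp
qed

lemma dist'_cong:
  assumes "dist' x0 x a = 0" "dist' x0 y b = 0"
  shows "dist' x0 a b = dist' x0 x y"
  using dist'_cong1[OF assms(1), of b] dist'_cong1[OF assms(2), of x] dist'_sym[of x0 b a] dist'_sym[of x0 b x] dist'_sym[of x0 y x] by simp

lemma tclass_mem: "u \<in> tclass x0 u"
  unfolding tclass_def dist'_def by (simp add: gp'_refl)

lemma some_tclass: "dist' x0 u (SOME a. a \<in> tclass x0 u) = 0"
proof -
  have "(SOME a. a \<in> tclass x0 u) \<in> tclass x0 u" by (rule someI[of _ u]) (rule tclass_mem)
  then show ?thesis unfolding tclass_def by simp
qed

lemma dstar_eq: "dstar x0 (tclass x0 x) (tclass x0 y) = dist' x0 x y"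
  unfolding dstar_def by (rule dist'_cong[OF some_tclass some_tclass])

lemma dist'_base: "dist' x0 x0 x = dist x0 x"
  unfolding dist'_def gp'_base by simp

lemma gps_eq: "gromov_prod_star x0 (tclass x0 x) (tclass x0 y) = gromov_prod' x0 x y"
proof -
  have "gromov_prod_star x0 (tclass x0 x) (tclass x0 y) =
      (dist' x0 x0 x + dist' x0 x0 y - dist' x0 x y) / 2"
    unfolding gromov_prod_star_def dstar_eq by (rule refl)
  also have "\<dots> = gromov_prod' x0 x y"
    unfolding dist'_base dist'_def[of x0 x y] by simp
  finally show ?thesis .
qed

lemma seg_path:
  fixes x0 p q :: "'a::metric_space"
  assumes geo: "geodesic_space TYPE('a)" and r: "r < gromov_prod x0 p q"
  shows "path_component (- cball x0 r) p q"
proof -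
  define D where "D = dist p q"
  obtain \<gamma> :: "real \<Rightarrow> 'a" where g0: "\<gamma> 0 = p" and gD: "\<gamma> D = q"
    and iso: "\<And>s t. s \<in> {0..D} \<Longrightarrow> t \<in> {0..D} \<Longrightarrow> dist (\<gamma> s) (\<gamma> t) = \<bar>s - t\<bar>"
    using geo unfolding geodesic_space_def D_def by blast
  have D0: "0 \<le> D" unfolding D_def by simp
  define g where "g t = \<gamma> (t * D)" for t
  have inI: "t * D \<in> {0..D}" if "t \<in> {0..1}" for t
    using that D0 mult_right_mono[of t 1 D] by auto
  have lip: "D-lipschitz_on {0..1} g"
  proof (rule lipschitz_onI)
    fix s t :: real assume "s \<in> {0..1}" "t \<in> {0..1}"
    then have "dist (g s) (g t) = \<bar>s * D - t * D\<bar>" unfolding g_def by (intro iso inI)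
    also have "\<dots> = D * dist s t" using D0 by (simp add: dist_real_def abs_mult left_diff_distrib[symmetric])
    finally show "dist (g s) (g t) \<le> D * dist s t" by simp
  qed (rule D0)
  have "path g" unfolding path_def by (rule lipschitz_on_continuous_on[OF lip])
  moreover have "path_image g \<subseteq> - cball x0 r"
  proof
    fix z assume "z \<in> path_image g"
    then obtain t where t: "t \<in> {0..1}" "z = g t" unfolding path_image_def by auto
    have "dist p z = t * D" using iso[OF _ inI[OF t(1)], of 0] D0 t unfolding g_def
      by (simp add: g0 mult_nonneg_nonneg)
    moreover have "dist z q = D - t * D" using iso[OF inI[OF t(1)], of D] D0 t unfolding g_def
      using mult_right_mono[of t 1 D] by (simp add: gD)
    ultimately have "dist p z + dist z q = dist p q" unfolding D_def by simp
    moreover have "dist x0 p \<le> dist x0 z + dist z p" "dist x0 q \<le> dist x0 z + dist z q"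
      by (rule dist_triangle)+
    ultimately have "gromov_prod x0 p q \<le> dist x0 z" unfolding gromov_prod_def
      by (simp add: dist_commute)
    then show "z \<in> - cball x0 r" using r by simp
  qed
  moreover have "pathstart g = p" "pathfinish g = q" unfolding pathstart_def pathfinish_def g_def
    using g0 gD by auto
  ultimately show ?thesis unfolding path_component_def by blast
qed

lemma chain_path:
  fixes x0 :: "'a::metric_space"
  assumes geo: "geodesic_space TYPE('a)" and xs: "2 \<le> length xs"
    and ch: "\<And>i. Suc i < length xs \<Longrightarrow> r < gromov_prod x0 (xs ! i) (xs ! Suc i)"
  shows "path_component (- cball x0 r) (hd xs) (last xs)"
proof -
  have "i < length xs \<longrightarrow> path_component (- cball x0 r) (xs ! 0) (xs ! i)" for i
  proof (induction i)
    case 0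
    have "r < dist x0 (xs ! 0)" using ch[of 0] gp_le1[of x0 "xs ! 0" "xs ! 1"] xs by simp
    then show ?case by (intro impI path_component_refl) simp
  next
    case (Suc i)
    then show ?case using seg_path[OF geo ch[of i]] path_component_trans by auto
  qed
  moreover have "xs \<noteq> []" using xs by auto
  ultimately show ?thesis by (simp add: hd_conv_nth last_conv_nth)
qed

lemma path_chain:
  fixes x0 x y :: "'a::metric_space"
  assumes "path_component (- cball x0 r) x y"
  shows "r < gromov_prod' x0 x y"
proof -
  obtain g where g: "path g" "path_image g \<subseteq> - cball x0 r" "pathstart g = x" "pathfinish g = y"
    using assms unfolding path_component_def by blast
  have cg: "continuous_on {0..1} g" using g(1) unfolding path_def .
  have cd: "continuous_on {0..1} (\<lambda>t. dist x0 (g t))" by (intro continuous_intros cg)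
  obtain t0 where t0: "t0 \<in> {0..1::real}" "\<And>t. t \<in> {0..1} \<Longrightarrow> dist x0 (g t0) \<le> dist x0 (g t)"
    using continuous_attains_inf[OF compact_Icc _ cd] by fastforce
  define m where "m = dist x0 (g t0)"
  have "g t0 \<in> path_image g" using t0 unfolding path_image_def by auto
  then have mr: "r < m" using g(2) unfolding m_def by auto
  have "uniformly_continuous_on {0..1} g" by (rule compact_uniformly_continuous[OF cg compact_Icc])
  then obtain \<delta> where dpos: "\<delta> > 0" and
    dl: "\<And>s t. s \<in> {0..1} \<Longrightarrow> t \<in> {0..1} \<Longrightarrow> dist s t < \<delta> \<Longrightarrow> dist (g s) (g t) < m - r"
    unfolding uniformly_continuous_on_def using mr by (metis diff_gt_0_iff_gt)
  obtain N :: nat where N: "N \<noteq> 0" "inverse (real N) < \<delta>" using real_arch_inverse dpos by blast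
  define xs where "xs = map (\<lambda>k. g (real k / real N)) [0..<Suc N]"
  have len: "length xs = Suc N" unfolding xs_def by simp
  have nth: "xs ! k = g (real k / real N)" if "k < Suc N" for k
    unfolding xs_def using that by (simp del: upt_Suc)
  have ne: "xs \<noteq> []" using len by auto
  have "hd xs = xs ! 0" "last xs = xs ! N" using len hd_conv_nth[OF ne] last_conv_nth[OF ne] by auto
  then have hl: "hd xs = x" "last xs = y" using nth[of 0] nth[of N] N g(3,4)
    unfolding pathstart_def pathfinish_def by auto
  have "\<forall>i. Suc i < length xs \<longrightarrow> r < gromov_prod x0 (xs ! i) (xs ! Suc i)"
  proof (intro allI impI)
    fix i assume i: "Suc i < length xs"
    define s where "s = real i / real N"
    define t where "t = real (Suc i) / real N"
    have s01: "s \<in> {0..1}" "t \<in> {0..1}" using i len N unfolding s_def t_def by auto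
    have "dist t s = inverse (real N)" unfolding s_def t_def dist_real_def using N
      by (simp add: divide_simps)
    then have d: "dist (g t) (g s) < m - r" using dl s01 N by auto
    have m1: "m \<le> dist x0 (g s)" "m \<le> dist x0 (g t)" using t0 s01 unfolding m_def by auto
    have "r < gromov_prod x0 (g s) (g t)" unfolding gromov_prod_def using d m1 mr
      by (simp add: dist_commute)
    then show "r < gromov_prod x0 (xs ! i) (xs ! Suc i)" using nth[of i] nth[of "Suc i"] i len
      unfolding s_def t_def by simp
  qed
  then show ?thesis unfolding gp'_gt_iff using len hl N by (intro exI[of _ xs]) auto
qed

theorem lemma6p3:
  fixes x0 x y :: "'a::metric_space" and r :: real
  assumes "geodesic_space TYPE('a)"
    and "0 \<le> r"
  shows "path_component (- cball x0 r) x y \<longleftrightarrow>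
         gromov_prod_star x0 (tclass x0 x) (tclass x0 y) > r"
  unfolding gps_eq
proof
  assume "path_component (- cball x0 r) x y"
  then show "r < gromov_prod' x0 x y" by (rule path_chain)
next
  assume "r < gromov_prod' x0 x y"
  then obtain xs where "2 \<le> length xs" "hd xs = x" "last xs = y"
    "\<And>i. Suc i < length xs \<Longrightarrow> r < gromov_prod x0 (xs ! i) (xs ! Suc i)"
    unfolding gp'_gt_iff by blast
  then show "path_component (- cball x0 r) x y" using chain_path[OF assms(1)] by metis
qed

end
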